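(* Let $k\ge4$ be an integer. In each of the cases (C1) $\eta\in[\pi/k,\eta_k)$ and $j\in\{k+1,\dots,2k-3\}$, and (C2) $\eta\in[\eta_{k+1},\pi/k)$ and $j\in\{k+1,\dots,2k-1\}$, we have $z_j\in\mathrm{co}(\{0,z_{j-1},w_1,1\})$ and $w_j\in\mathrm{co}(\{1,w_{j-1},b_0,a\})$.
   Context: For $\eta\in(0,\pi/3)$ let $a=\frac{e^{-i\eta}}{2\cos\eta}$, $c=\frac{1}{1-|a|^4}$, and for integers $j\ge0$ put $z_j=ca^{j+1}$, $w_j=1-c|a|^2a^j$, $b_0=a+c|a|^4$. For integers $k\ge1$ let $\Phi_k(\eta)=(1-|a|^4)\sin((k-1)\eta)-|a|^3\sin((k-2)\eta)+|a|^k\sin\eta$; for each $k\ge4$, $\Phi_k$ has a unique zero in $(\pi/k,\pi/(k-1))$, denoted $\eta_k$. $\mathrm{co}$ denotes convex hull. *)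

theory Defs
  imports "HOL-Analysis.Analysis"
begin

definition aa :: "real \<Rightarrow> complex" where
  "aa \<eta> = exp (- \<i> * complex_of_real \<eta>) / complex_of_real (2 * cos \<eta>)"

definition cc :: "real \<Rightarrow> real" where
  "cc \<eta> = 1 / (1 - cmod (aa \<eta>) ^ 4)"

definition zz :: "real \<Rightarrow> nat \<Rightarrow> complex" where
  "zz \<eta> j = complex_of_real (cc \<eta>) * aa \<eta> ^ (j + 1)"

definition ww :: "real \<Rightarrow> nat \<Rightarrow> complex" where
  "ww \<eta> j = 1 - complex_of_real (cc \<eta> * cmod (aa \<eta>) ^ 2) * aa \<eta> ^ j"

definition bb0 :: "real \<Rightarrow> complex" where
  "bb0 \<eta> = aa \<eta> + complex_of_real (cc \<eta> * cmod (aa \<eta>) ^ 4)"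

definition Phi :: "nat \<Rightarrow> real \<Rightarrow> real" where
  "Phi k \<eta> = (1 - cmod (aa \<eta>) ^ 4) * sin ((real k - 1) * \<eta>)
              - cmod (aa \<eta>) ^ 3 * sin ((real k - 2) * \<eta>)
              + cmod (aa \<eta>) ^ k * sin \<eta>"

definition eta_k :: "nat \<Rightarrow> real" where
  "eta_k k = (THE \<eta>. \<eta> \<in> {pi / real k <..< pi / (real k - 1)} \<and> Phi k \<eta> = 0)"

end

theory Submission
  imports Defs
begin

definition cr :: "complex \<Rightarrow> complex \<Rightarrow> real" where
  "cr u v = Im (cnj u * v)"

lemma in_tri:
  fixes A B C p :: complex
  assumes D: "cr (B - A) (C - A) > 0" and h1: "cr (B - A) (p - A) \<ge> 0"
    and h2: "cr (C - B) (p - B) \<ge> 0" and h3: "cr (A - C) (p - C) \<ge> 0"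
  shows "p \<in> convex hull {A, B, C}"
proof -
  define d where "d = cr (B - A) (C - A)"
  define u where "u = cr (C - B) (p - B) / d"
  define v where "v = cr (A - C) (p - C) / d"
  define w where "w = cr (B - A) (p - A) / d"
  have dp: "d > 0" using D d_def by simp
  have idt: "cr (C - B) (p - B) + cr (A - C) (p - C) + cr (B - A) (p - A) = d"
    unfolding d_def cr_def by (simp add: algebra_simps)
  have s: "u + v + w = 1" unfolding u_def v_def w_def using dp idt
    by (simp add: add_divide_distrib[symmetric])
  have e: "p = u *\<^sub>R A + v *\<^sub>R B + w *\<^sub>R C"
  proof -
    have m: "of_real d * p = of_real (cr (C - B) (p - B)) * A + of_real (cr (A - C) (p - C)) * B
         + of_real (cr (B - A) (p - A)) * C"
      unfolding d_def cr_def by (intro complex_eqI) (simp_all add: algebra_simps)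
    have "p = (of_real d * p) / of_real d" using dp by simp
    also have "\<dots> = u *\<^sub>R A + v *\<^sub>R B + w *\<^sub>R C"
      unfolding m u_def v_def w_def scaleR_conv_of_real using dp
      by (simp add: add_divide_distrib)
    finally show ?thesis .
  qed
  show ?thesis unfolding convex_hull_3
    using e s dp h1 h2 h3 unfolding u_def v_def w_def d_def
    by (intro CollectI exI[of _ u] exI[of _ v] exI[of _ w]) (auto simp: u_def v_def w_def d_def)
qed

lemma hull_affine:
  fixes b m x :: complex
  assumes "x \<in> convex hull S"
  shows "b + m * x \<in> convex hull ((\<lambda>y. b + m * y) ` S)"
proof -
  have l: "linear (\<lambda>y. m * y)" by (simp add: linear_iff algebra_simps) 
  have "(\<lambda>y. m * y) ` (convex hull S) = convex hull ((\<lambda>y. m * y) ` S)"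
    by (rule convex_hull_linear_image[OF l])
  hence "m * x \<in> convex hull ((\<lambda>y. m * y) ` S)" using assms by blast
  hence "b + m * x \<in> (\<lambda>y. b + y) ` (convex hull ((\<lambda>y. m * y) ` S))" by blast
  also have "\<dots> = convex hull ((\<lambda>y. b + y) ` (\<lambda>y. m * y) ` S)"
    by (rule convex_hull_translation[symmetric])
  also have "(\<lambda>y. b + y) ` (\<lambda>y. m * y) ` S = (\<lambda>y. b + m * y) ` S" by (simp add: image_image)
  finally show ?thesis .
qed

lemma cr_cis: "cr (of_real x * cis a) (of_real y * cis b) = x * y * sin (b - a)"
  by (simp add: cr_def sin_diff algebra_simps)
lemma cr_diff_left: "cr (u - v) w = cr u w - cr v w" by (simp add: cr_def algebra_simps)
lemma cr_diff_right: "cr w (u - v) = cr w u - cr w v" by (simp add: cr_def algebra_simps)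
lemma cr_one_left: "cr 1 (of_real y * cis b) = y * sin b" by (simp add: cr_def)
lemma cr_one_right: "cr (of_real y * cis b) 1 = - (y * sin b)" by (simp add: cr_def)
lemma cr_swap: "cr u v = - cr v u" by (simp add: cr_def algebra_simps)
lemma cr_neg_left: "cr (- u) v = - cr u v" by (simp add: cr_def)
lemma cr_one_gen: "cr 1 v = Im v" by (simp add: cr_def)
lemma cr_zero_right[simp]: "cr u 0 = 0" by (simp add: cr_def)
lemma cr_zero_left[simp]: "cr 0 u = 0" by (simp add: cr_def)
lemma cr_self[simp]: "cr u u = 0" by (simp add: cr_def algebra_simps)
lemma cr_one_one[simp]: "cr 1 1 = 0" by (simp add: cr_def)

lemma aa_eq: assumes "cos t > 0" shows "aa t = of_real (1 / (2 * cos t)) * cis (- t)"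
  unfolding aa_def cis_conv_exp by (simp add: field_simps)

lemma aa_pow: assumes "cos t > 0"
  shows "aa t ^ n = of_real ((1 / (2 * cos t)) ^ n) * cis (- (real n * t))"
proof -
  have "cis (- t) ^ n = cis (- (real n * t))" using Complex.DeMoivre[of "- t" n] by simp
  thus ?thesis unfolding aa_eq[OF assms] power_mult_distrib by (simp add: of_real_power)
qed

lemma cmod_aa: assumes "cos t > 0" shows "cmod (aa t) = 1 / (2 * cos t)"
  unfolding aa_eq[OF assms] using assms by (simp add: norm_mult del: of_real_divide)

lemma geoZ:
  fixes t :: real and j :: nat
  defines "r \<equiv> 1 / (2 * cos t)"
  assumes t0: "0 < t" and t1: "t < pi / 3" and j1: "j \<ge> 1"
    and hA: "sin ((real j + 1) * t) \<le> 0"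
    and hB: "r ^ (j + 1) * sin (real j * t) + (1 - r ^ 4) * sin t \<ge> 0"
    and hC: "(1 - r\<^sup>2 - r ^ 4) * sin ((real j - 1) * t) + r ^ 3 * sin (real j * t) + r ^ j * sin t \<le> 0"
  shows "zz t j \<in> convex hull {0, zz t (j - 1), ww t 1, 1}"
proof -
  have cpos: "cos t > 1/2"
  proof -
    have "cos (pi/3) < cos t" using t0 t1 by (intro cos_monotone_0_pi) auto
    thus ?thesis by (simp add: cos_60)
  qed
  hence cp: "cos t > 0" by simp
  have st: "sin t > 0" using t0 t1 by (intro sin_gt_zero) auto
  have r0: "r > 0" using cp by (simp add: r_def)
  have r1: "r < 1" using cpos by (simp add: r_def field_simps)
  have r4: "r ^ 4 < 1" using r0 r1 by (simp add: power_less_one_iff)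
  define c where "c = 1 / (1 - r ^ 4)"
  have c0: "c > 0" using r4 by (simp add: c_def)
  have cc: "cc t = c" unfolding cc_def c_def cmod_aa[OF cp] r_def ..
  have Z: "zz t j = of_real (c * r ^ (j + 1)) * cis (- ((real j + 1) * t))"
    unfolding zz_def cc aa_pow[OF cp] r_def by (simp add: add.commute)
  have P: "zz t (j - 1) = of_real (c * r ^ j) * cis (- (real j * t))"
    unfolding zz_def cc aa_pow[OF cp] r_def using j1 by simp
  have W: "ww t 1 = 1 - of_real (c * r ^ 3) * cis (- t)"
    unfolding ww_def cc aa_pow[OF cp] cmod_aa[OF cp] r_def
    by (simp add: power2_eq_square power3_eq_cube)
  define Zp where "Zp = zz t j"
  define Pp where "Pp = zz t (j - 1)"
  define Wp where "Wp = ww t 1"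
  have crPZ: "cr Pp Zp = - (c * c * (r ^ j * r ^ j * r) * sin t)"
    unfolding Zp_def Pp_def Z P cr_cis by (simp add: power2_eq_square power_add algebra_simps mult_2)
  have e1: "- ((real j + 1) * t) - - t = - (real j * t)" by (simp add: algebra_simps)
  have e2: "- (real j * t) - - t = - ((real j - 1) * t)" by (simp add: algebra_simps)
  have e3: "- ((real j + 1) * t) = - (real j * t) - t" by (simp add: algebra_simps)
  have crWZ: "cr Wp Zp = - (c * r ^ (j + 1) * sin ((real j + 1) * t))
        + c * c * r ^ 3 * r ^ (j + 1) * sin (real j * t)"
    unfolding Wp_def Zp_def W Z cr_diff_left cr_one_left cr_cis e1 sin_minus by (simp add: algebra_simps)
  have crWP: "cr Wp Pp = - (c * r ^ j * sin (real j * t))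
        + c * c * r ^ 3 * r ^ j * sin ((real j - 1) * t)"
    unfolding Wp_def Pp_def W P cr_diff_left cr_one_left cr_cis e2 sin_minus by (simp add: algebra_simps)
  have Srec: "sin ((real j + 1) * t) = 2 * cos t * sin (real j * t) - sin ((real j - 1) * t)"
    by (simp add: distrib_right left_diff_distrib sin_add sin_diff algebra_simps)
  have rc: "2 * cos t = 1 / r" using cp by (simp add: r_def)
  have cinv: "c * (1 - r ^ 4) = 1" using r4 by (simp add: c_def)
  define Psi where "Psi = (1 - r\<^sup>2 - r ^ 4) * sin ((real j - 1) * t) + r ^ 3 * sin (real j * t) + r ^ j * sin t"
  have h2id: "cr (Pp - Wp) (Zp - Wp) = - (c * c * r ^ (j + 1) * Psi)"
  proof -
    have "cr (Pp - Wp) (Zp - Wp) = cr Pp Zp + cr Wp Pp - cr Wp Zp"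
      by (simp add: cr_diff_left cr_diff_right cr_swap[of Pp Wp])
    also have "\<dots> = - (c * c * r ^ (j + 1) * Psi)"
    proof -
      define R where "R = r ^ j"
      define X where "X = sin ((real j - 1) * t)"
      define Y where "Y = sin (real j * t)"
      have "cr Pp Zp + cr Wp Pp - cr Wp Zp = - (c * c * (R * R * r) * sin t) +
        (- (c * R * Y) + c * c * r ^ 3 * R * X) -
        (- (c * (r * R) * (Y / r - X)) + c * c * r ^ 3 * (r * R) * Y)"
        unfolding crPZ crWP crWZ Srec rc R_def X_def Y_def by simp
      also have "\<dots> = - (c * c * (r * R) * ((1 - r\<^sup>2 - r ^ 4) * X + r ^ 3 * Y + R * sin t))"
        using r0 cinv by (simp add: field_simps) algebra
      finally show ?thesis unfolding Psi_def R_def X_def Y_def by simp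
    qed
    finally show ?thesis .
  qed
  have Psi0: "Psi \<le> 0" using hC unfolding Psi_def .
  have PZneg: "cr Pp Zp < 0" unfolding crPZ using c0 r0 st by simp
  have sub1: "{0, Wp, Pp} \<subseteq> {0, Pp, Wp, 1}" by auto
  have sub2: "{0, 1, Wp} \<subseteq> {0, Pp, Wp, 1}" by auto
  show ?thesis
  proof (cases "cr Wp Zp \<ge> 0")
    case True
    have h2: "cr (Pp - Wp) (Zp - Wp) \<ge> 0" unfolding h2id using c0 r0 Psi0
      by (simp add: mult_nonneg_nonpos)
    have "cr Wp Pp = cr (Pp - Wp) (Zp - Wp) - cr Pp Zp + cr Wp Zp"
      by (simp add: cr_diff_left cr_diff_right cr_swap[of Pp Wp])
    hence D: "cr (Wp - 0) (Pp - 0) > 0" using h2 PZneg True by simp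
    have h3: "cr (0 - Pp) (Zp - Pp) \<ge> 0" using PZneg
      by (simp add: cr_neg_left cr_diff_right)
    have "Zp \<in> convex hull {0, Wp, Pp}"
      by (rule in_tri[OF D]) (use True h2 h3 in simp_all)
    thus ?thesis using hull_mono[OF sub1] unfolding Zp_def Pp_def Wp_def by blast
  next
    case False
    have D: "cr (1 - 0) (Wp - 0) > 0"
      unfolding Wp_def W using c0 r0 st by (simp add: cr_one_gen)
    have h1: "cr (1 - 0) (Zp - 0) \<ge> 0"
      unfolding Zp_def Z using c0 r0 hA by (simp add: cr_one_gen mult_nonneg_nonpos del: of_real_mult)
    have h2: "cr (Wp - 1) (Zp - 1) \<ge> 0"
    proof -
      have eqW: "Wp - 1 = - (of_real (c * r ^ 3) * cis (- t))" unfolding Wp_def W by simp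
      have "cr (Wp - 1) (Zp - 1) = - (c * r ^ 3 * (c * r ^ (j + 1)) * sin (- ((real j + 1) * t) - - t))
           + (- (c * r ^ 3 * sin (- t)))"
        unfolding eqW Zp_def Z cr_neg_left cr_diff_right cr_cis cr_one_right by simp
      also have "\<dots> = c * c * r ^ 3 * (r ^ (j + 1) * sin (real j * t)) + c * r ^ 3 * sin t"
        unfolding e1 sin_minus by simp
      also have "\<dots> = c * c * r ^ 3 * (r ^ (j + 1) * sin (real j * t) + (1 - r ^ 4) * sin t)"
        using cinv by algebra
      finally have "cr (Wp - 1) (Zp - 1) = c * c * r ^ 3 * (r ^ (j + 1) * sin (real j * t) + (1 - r ^ 4) * sin t)" .
      thus ?thesis using hB c0 r0 by simp
    qed
    have h3: "cr (0 - Wp) (Zp - Wp) \<ge> 0" using False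
      by (simp add: cr_neg_left cr_diff_right)
    have "Zp \<in> convex hull {0, 1, Wp}"
      by (rule in_tri[OF D h1 h2 h3])
    thus ?thesis using hull_mono[OF sub2] unfolding Zp_def Pp_def Wp_def by blast
  qed
qed

lemma geoW:
  fixes t :: real and j :: nat
  assumes cp: "cos t > 0" and j1: "j \<ge> 1"
    and hz: "zz t j \<in> convex hull {0, zz t (j - 1), ww t 1, 1}"
  shows "ww t j \<in> convex hull {1, ww t (j - 1), bb0 t, aa t}"
proof -
  define a where "a = aa t"
  define T where "T = (\<lambda>y. 1 + (- cnj a) * y)"
  have ca: "cnj a * a = of_real (cmod a ^ 2)" using complex_norm_square[of a] by (simp add: mult.commute)
  have re: "1 - cnj a = a"
    unfolding a_def aa_eq[OF cp] using cp by (intro complex_eqI) (simp_all add: field_simps)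
  have Tz: "\<And>i. T (zz t i) = ww t i"
  proof -
    fix i
    have "T (zz t i) = 1 - of_real (cc t) * (cnj a * a) * a ^ i"
      unfolding T_def zz_def a_def[symmetric] by (simp add: algebra_simps)
    also have "\<dots> = ww t i" unfolding ca ww_def a_def[symmetric] by simp
    finally show "T (zz t i) = ww t i" .
  qed
  have Tw1: "T (ww t 1) = bb0 t"
  proof -
    have "T (ww t 1) = (1 - cnj a) + of_real (cc t * cmod a ^ 2) * (cnj a * a)"
      unfolding T_def ww_def a_def[symmetric] by (simp add: algebra_simps)
    also have "\<dots> = bb0 t" unfolding re ca bb0_def a_def[symmetric] by (simp add: power_add[symmetric] algebra_simps)
    finally show ?thesis .
  qed
  have T0: "T 0 = 1" by (simp add: T_def)
  have T1: "T 1 = aa t" unfolding T_def using re by (simp add: a_def)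
  have "T (zz t j) \<in> convex hull (T ` {0, zz t (j - 1), ww t 1, 1})"
    unfolding T_def by (rule hull_affine[OF hz])
  thus ?thesis unfolding Tz image_insert image_empty T0 T1 Tw1 Tz by simp
qed

lemma abs_sin_mult: "\<bar>sin (real n * x)\<bar> \<le> real n * \<bar>sin x\<bar>"
proof (induction n)
  case 0 then show ?case by simp
next
  case (Suc n)
  have "sin (real (Suc n) * x) = sin (real n * x) * cos x + cos (real n * x) * sin x"
    by (simp add: distrib_right sin_add)
  hence "\<bar>sin (real (Suc n) * x)\<bar> \<le> \<bar>sin (real n * x)\<bar> * \<bar>cos x\<bar> + \<bar>cos (real n * x)\<bar> * \<bar>sin x\<bar>"
    by (simp add: abs_mult[symmetric])
  also have "\<dots> \<le> \<bar>sin (real n * x)\<bar> + \<bar>sin x\<bar>"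
    by (intro add_mono) (auto intro: mult_left_le mult_left_le_one_le simp: abs_cos_le_one)
  also have "\<dots> \<le> real (Suc n) * \<bar>sin x\<bar>" using Suc.IH by (simp add: algebra_simps)
  finally show ?case .
qed

lemma npow_bound:
  fixes r :: real
  assumes r0: "0 \<le> r" and r2: "r\<^sup>2 \<le> 1/2"
  shows "real n * r ^ (n + 1) \<le> 3/4"
proof (induction n rule: less_induct)
  case (less n)
  have r1: "r \<le> 3/4"
  proof (rule ccontr)
    assume "\<not> r \<le> 3/4"
    hence "(3/4)\<^sup>2 < r\<^sup>2" using r0 by (intro power_strict_mono) auto
    thus False using r2 by (simp add: power2_eq_square)
  qed
  show ?case
  proof (cases "n < 4")
    case True
    then consider "n = 0" | "n = 1" | "n = 2" | "n = 3" by linarith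
    thus ?thesis
    proof cases
      case 1 thus ?thesis by simp
    next
      case 2 thus ?thesis using r2 by (simp add: power2_eq_square)
    next
      case 3
      have "r ^ 3 = r * r\<^sup>2" by (simp add: power2_eq_square power3_eq_cube)
      also have "\<dots> \<le> (3/4) * (1/2)" using r0 r1 r2 by (intro mult_mono) auto
      finally show ?thesis using 3 by simp
    next
      case 4
      have "r ^ 4 = r\<^sup>2 * r\<^sup>2" by (simp add: power2_eq_square power4_eq_xxxx)
      also have "\<dots> \<le> (1/2) * (1/2)" using r0 r2 by (intro mult_mono) auto
      finally show ?thesis using 4 by simp
    qed
  next
    case False
    define m where "m = n - 2"
    have n: "n = m + 2" and m2: "m \<ge> 2" using False by (auto simp: m_def)
    have IH: "real m * r ^ (m + 1) \<le> 3/4" using less n by simp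
    have "real n * r ^ (n + 1) = (real m + 2) * r\<^sup>2 * r ^ (m + 1)"
      by (simp add: n power_add power2_eq_square algebra_simps)
    also have "\<dots> \<le> (real m + 2) * (1/2) * r ^ (m + 1)"
      using r0 r2 by (intro mult_right_mono mult_left_mono) auto
    also have "\<dots> \<le> real m * r ^ (m + 1)"
      using m2 r0 by (intro mult_right_mono) auto
    finally show ?thesis using IH by linarith
  qed
qed

lemma sin_le0: "pi \<le> y \<Longrightarrow> y \<le> 2 * pi \<Longrightarrow> sin y \<le> 0"
proof -
  assume a: "pi \<le> y" "y \<le> 2 * pi"
  have "sin (y - pi) \<ge> 0" using a by (intro sin_ge_zero) auto
  thus ?thesis by (simp add: sin_diff)
qed

lemma sin_le_neg:
  assumes "0 \<le> t" "t \<le> pi/2" "pi + t \<le> y" "y \<le> 2 * pi - t"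
  shows "sin y \<le> - sin t"
proof -
  have "sin t \<le> sin (y - pi)"
  proof (cases "y - pi \<le> pi/2")
    case True thus ?thesis using assms by (intro sin_monotone_2pi_le) auto
  next
    case False
    have "sin t \<le> sin (2 * pi - y)" using assms False by (intro sin_monotone_2pi_le) auto
    also have "sin (2 * pi - y) = sin (y - pi)"
      by (simp add: sin_diff)
    finally show ?thesis .
  qed
  thus ?thesis by (simp add: sin_diff)
qed

definition rr :: "real \<Rightarrow> real" where "rr t = 1 / (2 * cos t)"

definition Psi :: "nat \<Rightarrow> real \<Rightarrow> real" where
  "Psi m t = (1 - (rr t)\<^sup>2 - rr t ^ 4) * sin ((real m - 1) * t) + rr t ^ 3 * sin (real m * t)
     + rr t ^ m * sin t"

lemma sin_rec: "sin ((x + 1) * t :: real) + sin ((x - 1) * t) = 2 * cos t * sin (x * t)"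
  by (simp add: distrib_right left_diff_distrib sin_add sin_diff algebra_simps)

lemma Phi_eq: assumes "cos t > 0" shows "Phi m t = Psi m t"
proof -
  have cm: "cmod (aa t) = rr t" using cmod_aa[OF assms] by (simp add: rr_def)
  have "sin (((real m - 1) + 1) * t) + sin (((real m - 1) - 1) * t) = 2 * cos t * sin ((real m - 1) * t)"
    by (rule sin_rec)
  hence s: "sin ((real m - 2) * t) = 2 * cos t * sin ((real m - 1) * t) - sin (real m * t)"
    by (simp add: algebra_simps)
  have rc: "rr t * (2 * cos t) = 1" using assms by (simp add: rr_def)
  have rc3: "rr t ^ 3 * (2 * cos t * X - Y) = (rr t)\<^sup>2 * X - rr t ^ 3 * Y" for X Y
  proof -
    have "rr t ^ 3 * (2 * cos t * X - Y) = (rr t)\<^sup>2 * (rr t * (2 * cos t)) * X - rr t ^ 3 * Y"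
      by (simp add: algebra_simps power2_eq_square power3_eq_cube)
    thus ?thesis unfolding rc by simp
  qed
  show ?thesis unfolding Phi_def Psi_def cm s rc3 by (simp add: algebra_simps)
qed

lemma small_t:
  assumes "0 < t" "t \<le> pi / 4"
  shows "cos t > 0" "sin t > 0" "rr t > 0" "(rr t)\<^sup>2 \<le> 1/2" "rr t < 1"
proof -
  have c: "cos (pi/4) \<le> cos t" using assms by (intro cos_monotone_0_pi_le) auto
  hence c2: "sqrt 2 / 2 \<le> cos t" by (simp add: cos_45)
  show cp: "cos t > 0" using assms by (intro cos_gt_zero_pi) auto
  show "sin t > 0" using assms by (intro sin_gt_zero) auto
  show "rr t > 0" using cp by (simp add: rr_def)
  have "(sqrt 2 / 2)\<^sup>2 \<le> (cos t)\<^sup>2" using c2 by (intro power_mono) auto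
  moreover have "(sqrt 2 / 2)\<^sup>2 = 1/2" by (simp add: power_divide)
  ultimately have cc: "1/2 \<le> (cos t)\<^sup>2" by simp
  have "(rr t)\<^sup>2 = 1 / (4 * (cos t)\<^sup>2)" by (simp add: rr_def power_divide power_mult_distrib)
  also have "\<dots> \<le> 1 / (4 * (1/2))" using cc by (intro divide_left_mono) auto
  finally show "(rr t)\<^sup>2 \<le> 1/2" by simp
  have "sqrt 2 > 1" by simp
  hence "cos t > 1/2" using c2 by linarith
  thus "rr t < 1" using cp unfolding rr_def by (simp add: divide_less_eq)
qed

lemma condB_gen:
  assumes "0 < t" "t \<le> pi / 4"
  shows "rr t ^ (j + 1) * sin (real j * t) + (1 - rr t ^ 4) * sin t \<ge> 0"
proof -
  note st = small_t[OF assms]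
  have "\<bar>sin (real j * t)\<bar> \<le> real j * sin t" using abs_sin_mult[of j t] st by simp
  hence l: "- (real j * sin t) \<le> sin (real j * t)" by linarith
  have R0: "rr t ^ (j + 1) \<ge> 0" using st by simp
  have m1: "rr t ^ (j + 1) * (- (real j * sin t)) \<le> rr t ^ (j + 1) * sin (real j * t)"
    by (rule mult_left_mono[OF l R0])
  have "real j * rr t ^ (j + 1) \<le> 3/4" using npow_bound[of "rr t" j] st by simp
  hence m2: "(real j * rr t ^ (j + 1)) * sin t \<le> 3/4 * sin t"
    using st by (intro mult_right_mono) auto
  have r4: "rr t ^ 4 \<le> 1/4"
  proof -
    have "rr t ^ 4 = (rr t)\<^sup>2 * (rr t)\<^sup>2" by (simp add: power2_eq_square power4_eq_xxxx)
    also have "\<dots> \<le> (1/2) * (1/2)" using st by (intro mult_mono) auto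
    finally show ?thesis by simp
  qed
  have m3: "(1 - rr t ^ 4) * sin t \<ge> 3/4 * sin t" using r4 st by (intro mult_right_mono) auto
  have e: "rr t ^ (j + 1) * (- (real j * sin t)) = - ((real j * rr t ^ (j + 1)) * sin t)" by simp
  show ?thesis using m1 m2 m3 unfolding e by linarith
qed

lemma condC_gen:
  assumes "0 < t" "t \<le> pi / 4" "j \<ge> 3" "pi \<le> (real j - 1) * t" "(real j + 1) * t \<le> 2 * pi"
  shows "Psi j t \<le> 0"
proof -
  note st = small_t[OF assms(1,2)]
  have q: "1 - (rr t)\<^sup>2 - rr t ^ 4 \<ge> 0"
  proof -
    have "rr t ^ 4 = (rr t)\<^sup>2 * (rr t)\<^sup>2" by (simp add: power2_eq_square power4_eq_xxxx)
    also have "\<dots> \<le> (1/2) * (1/2)" using st by (intro mult_mono) auto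
    finally show ?thesis using st by simp
  qed
  have s1: "sin ((real j - 1) * t) \<le> 0" using assms by (intro sin_le0) (auto simp: algebra_simps)
  have s2: "sin (real j * t) \<le> - sin t"
    using assms by (intro sin_le_neg) (auto simp: algebra_simps)
  have p: "rr t ^ j \<le> rr t ^ 3" using st assms by (intro power_decreasing) auto
  have "Psi j t \<le> 0 + rr t ^ 3 * (- sin t) + rr t ^ 3 * sin t"
    unfolding Psi_def
    using q s1 s2 p st by (intro add_mono mult_nonneg_nonpos mult_left_mono mult_right_mono) auto
  thus ?thesis by simp
qed

definition Hm :: "nat \<Rightarrow> real \<Rightarrow> real" where
  "Hm m t = sin (real m * t) / sin t + rr t ^ (m - 3)"

lemma rr_deriv:
  assumes "cos x \<noteq> 0"
  shows "(rr has_real_derivative (2 * sin x / (2 * cos x)\<^sup>2)) (at x)"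
  unfolding rr_def[abs_def] using assms
  by (auto intro!: derivative_eq_intros simp: power2_eq_square field_simps)

lemma Hm_deriv_aux:
  assumes "cos x \<noteq> 0" "sin x \<noteq> 0"
  shows "((\<lambda>t. sin (real m * t) / sin t + rr t ^ Suc p) has_real_derivative
     ((real m * cos (real m * x) * sin x - sin (real m * x) * cos x) / (sin x)\<^sup>2
       + real (Suc p) * rr x ^ p * (2 * sin x / (2 * cos x)\<^sup>2))) (at x)"
proof -
  have d1: "((\<lambda>t. sin (real m * t) / sin t) has_real_derivative
     ((real m * cos (real m * x) * sin x - sin (real m * x) * cos x) / (sin x)\<^sup>2)) (at x)"
    using assms by (auto intro!: derivative_eq_intros simp: power2_eq_square field_simps)
  have d2: "((\<lambda>t. rr t ^ Suc p) has_real_derivative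
     (1 + of_nat p) * ((2 * sin x / (2 * cos x)\<^sup>2) * rr x ^ p)) (at x)"
    by (rule DERIV_power_Suc[OF rr_deriv[OF assms(1)]])
  show ?thesis using DERIV_add[OF d1 d2] by (simp add: algebra_simps)
qed

lemma Hm_deriv:
  assumes "cos x \<noteq> 0" "sin x \<noteq> 0" "m \<ge> 4"
  shows "(Hm m has_real_derivative
     ((real m * cos (real m * x) * sin x - sin (real m * x) * cos x) / (sin x)\<^sup>2
       + real (m - 3) * rr x ^ (m - 4) * (2 * sin x / (2 * cos x)\<^sup>2))) (at x)"
proof -
  define p where "p = m - 4"
  have p: "m - 3 = Suc p" using assms(3) by (simp add: p_def)
  have p2: "m - 4 = p" using p by simp
  have "Hm m = (\<lambda>t. sin (real m * t) / sin t + rr t ^ Suc p)" unfolding Hm_def[abs_def] p ..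
  thus ?thesis unfolding p p2 using Hm_deriv_aux[OF assms(1,2)] by simp
qed

lemma interval_facts:
  assumes m5: "m \<ge> 5" and x1: "pi / real m \<le> x" and x2: "x \<le> pi / (real m - 1)"
  shows "0 < x" "x \<le> pi / 4" "pi \<le> real m * x" "(real m - 1) * x \<le> pi"
proof -
  have mpos: "real m - 1 > 0" using m5 by simp
  have "pi / real m > 0" using m5 by simp
  thus "0 < x" using x1 by linarith
  have "pi / (real m - 1) \<le> pi / 4" using m5 by (intro divide_left_mono) auto
  thus "x \<le> pi / 4" using x2 by linarith
  show "pi \<le> real m * x" using x1 m5 by (simp add: field_simps)
  show "(real m - 1) * x \<le> pi" using x2 mpos by (simp add: field_simps)
qed

lemma Hm_deriv_neg:
  assumes m5: "m \<ge> 5" and x1: "pi / real m \<le> x" and x2: "x \<le> pi / (real m - 1)"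
  shows "(real m * cos (real m * x) * sin x - sin (real m * x) * cos x) / (sin x)\<^sup>2
       + real (m - 3) * rr x ^ (m - 4) * (2 * sin x / (2 * cos x)\<^sup>2) < 0"
proof -
  note ifc = interval_facts[OF assms]
  note st = small_t[OF ifc(1,2)]
  define s where "s = sin x"
  define r where "r = rr x"
  define y where "y = real m * x - pi"
  have y0: "0 \<le> y" and yx: "y \<le> x" using ifc by (auto simp: y_def algebra_simps)
  have cm: "cos (real m * x) = - cos y" and sm: "sin (real m * x) = - sin y"
    by (simp_all add: y_def cos_diff sin_diff)
  have sxy: "sin (x - y) \<ge> 0" using y0 yx ifc by (intro sin_ge_zero) auto
  have cy: "cos y \<ge> 1/2"
  proof -
    have "cos (pi/3) \<le> cos y" using y0 yx ifc by (intro cos_monotone_0_pi_le) auto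
    thus ?thesis by (simp add: cos_60)
  qed
  have N1: "real m * cos (real m * x) * s - sin (real m * x) * cos x
        = - ((real m - 1) * cos y * s) - sin (x - y)"
    unfolding cm sm s_def by (simp add: sin_diff algebra_simps)
  have N1b: "real m * cos (real m * x) * s - sin (real m * x) * cos x \<le> - ((real m - 1) / 2 * s)"
  proof -
    have "(real m - 1) * (1/2) \<le> (real m - 1) * cos y" using cy m5 by (intro mult_left_mono) auto
    hence "(real m - 1) / 2 * s \<le> (real m - 1) * cos y * s"
      using st unfolding s_def by (intro mult_right_mono) auto
    thus ?thesis unfolding N1 using sxy by linarith
  qed
  have sec: "real (m - 3) * rr x ^ (m - 4) * (2 * sin x / (2 * cos x)\<^sup>2)
      = 2 * (real (m - 3) * r ^ (m - 3 + 1)) * s"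
  proof -
    have "2 * sin x / (2 * cos x)\<^sup>2 = 2 * r\<^sup>2 * s" unfolding r_def s_def rr_def
      by (simp add: power_divide)
    moreover have "r ^ (m - 4) * r\<^sup>2 = r ^ (m - 3 + 1)" using m5
    proof -
      have "m - 3 + 1 = (m - 4) + 2" using m5 by simp
      thus ?thesis by (simp only: power_add)
    qed
    ultimately show ?thesis unfolding r_def[symmetric] by (simp add: algebra_simps)
  qed
  have nb: "real (m - 3) * r ^ (m - 3 + 1) \<le> 3/4" using npow_bound[of r "m - 3"] st by (simp add: r_def)
  have s0: "s > 0" and s1: "s \<le> 1" using st by (auto simp: s_def)
  have "2 * (real (m - 3) * r ^ (m - 3 + 1)) * s \<le> 3/2 * s" using nb s0 by simp
  have m4: "(real m - 1) / 2 \<ge> 2" using m5 by simp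
  have A: "(real m * cos (real m * x) * s - sin (real m * x) * cos x) / s\<^sup>2 \<le> - ((real m - 1) / 2 * s) / s\<^sup>2"
    using N1b s0 by (intro divide_right_mono) auto
  have B: "- ((real m - 1) / 2 * s) / s\<^sup>2 = - ((real m - 1) / 2) / s" using s0 by (simp add: power2_eq_square)
  have C: "- ((real m - 1) / 2) / s \<le> - 2" using s0 s1 m4 by (simp add: field_simps)
  have X0: "real (m - 3) * r ^ (m - 3 + 1) \<ge> 0" using st by (simp add: r_def)
  have "(real (m - 3) * r ^ (m - 3 + 1)) * s \<le> real (m - 3) * r ^ (m - 3 + 1)"
    by (rule mult_right_le_one_le[OF X0]) (use s0 s1 in auto)
  hence D: "2 * (real (m - 3) * r ^ (m - 3 + 1)) * s \<le> 3/2" using nb by simp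
  show ?thesis unfolding sec using A B C D unfolding s_def by linarith
qed

lemma Hm_strict:
  assumes m5: "m \<ge> 5" and t1: "pi / real m \<le> t1" and t12: "t1 < t2" and t2: "t2 \<le> pi / (real m - 1)"
  shows "Hm m t2 < Hm m t1"
proof (rule DERIV_neg_imp_decreasing[OF t12])
  fix x assume a: "t1 \<le> x" "x \<le> t2"
  have x1: "pi / real m \<le> x" and x2: "x \<le> pi / (real m - 1)" using a t1 t2 by auto
  note ifc = interval_facts[OF m5 x1 x2]
  note st = small_t[OF ifc(1,2)]
  show "\<exists>y. (Hm m has_real_derivative y) (at x) \<and> y < 0"
    using Hm_deriv[of x m] Hm_deriv_neg[OF m5 x1 x2] st m5 by auto
qed

definition Gm :: "nat \<Rightarrow> real \<Rightarrow> real" where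
  "Gm m t = (1 - (rr t)\<^sup>2 - rr t ^ 4) / rr t ^ 3 * (sin ((real m - 1) * t) / sin t) + Hm m t"

lemma Psi_G:
  assumes "m \<ge> 3" "rr t \<noteq> 0" "sin t \<noteq> 0"
  shows "Psi m t = rr t ^ 3 * sin t * Gm m t"
proof -
  have "rr t ^ m = rr t ^ 3 * rr t ^ (m - 3)" using assms(1)
    by (simp add: power_add[symmetric])
  thus ?thesis unfolding Psi_def Gm_def Hm_def using assms(2,3)
    by (simp add: field_simps)
qed

lemma rr_mono:
  assumes "0 \<le> t1" "t1 \<le> t2" "t2 < pi / 2"
  shows "rr t1 \<le> rr t2"
proof -
  have c2: "cos t2 > 0" using assms by (intro cos_gt_zero_pi) auto
  have "cos t2 \<le> cos t1" using assms by (intro cos_monotone_0_pi_le) auto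
  thus ?thesis unfolding rr_def using c2 by (intro divide_left_mono mult_pos_pos) auto
qed

lemma Tm_anti:
  assumes m5: "m \<ge> 5" and t1: "pi / real m \<le> t1" and t12: "t1 \<le> t2" and t2: "t2 \<le> pi / (real m - 1)"
  shows "(1 - (rr t2)\<^sup>2 - rr t2 ^ 4) / rr t2 ^ 3 * (sin ((real m - 1) * t2) / sin t2)
      \<le> (1 - (rr t1)\<^sup>2 - rr t1 ^ 4) / rr t1 ^ 3 * (sin ((real m - 1) * t1) / sin t1)"
proof -
  have t2' : "pi / real m \<le> t2" using t1 t12 by linarith
  have t1' : "t1 \<le> pi / (real m - 1)" using t2 t12 by linarith
  note i1 = interval_facts[OF m5 t1 t1'] and i2 = interval_facts[OF m5 t2' t2]
  note s1 = small_t[OF i1(1,2)] and s2 = small_t[OF i2(1,2)]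
  have r12: "rr t1 \<le> rr t2" using i1 i2 t12 by (intro rr_mono) auto
  have n1: "1 - (rr t2)\<^sup>2 - rr t2 ^ 4 \<le> 1 - (rr t1)\<^sup>2 - rr t1 ^ 4"
    using r12 s1 by (smt (verit) power_mono)
  have n0: "0 \<le> 1 - (rr t2)\<^sup>2 - rr t2 ^ 4"
  proof -
    have "rr t2 ^ 4 = (rr t2)\<^sup>2 * (rr t2)\<^sup>2" by (simp add: power2_eq_square power4_eq_xxxx)
    also have "\<dots> \<le> (1/2) * (1/2)" using s2 by (intro mult_mono) auto
    finally show ?thesis using s2 by simp
  qed
  have c3: "rr t1 ^ 3 \<le> rr t2 ^ 3" using r12 s1 by (intro power_mono) auto
  have f: "(1 - (rr t2)\<^sup>2 - rr t2 ^ 4) / rr t2 ^ 3 \<le> (1 - (rr t1)\<^sup>2 - rr t1 ^ 4) / rr t1 ^ 3"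
    using n1 n0 c3 s1 by (intro frac_le) auto
  have f0: "0 \<le> (1 - (rr t1)\<^sup>2 - rr t1 ^ 4) / rr t1 ^ 3" using n0 n1 s1 by simp
  have sa: "sin ((real m - 1) * t2) \<le> sin ((real m - 1) * t1)"
  proof -
    have "sin (pi - (real m - 1) * t2) \<le> sin (pi - (real m - 1) * t1)"
    proof (rule sin_monotone_2pi_le)
      show "- (pi / 2) \<le> pi - (real m - 1) * t2" using i2 by simp
      show "pi - (real m - 1) * t2 \<le> pi - (real m - 1) * t1" using t12 m5 by (simp add: mult_left_mono)
      have "(real m - 1) * (pi / real m) \<le> (real m - 1) * t1"
        using t1 m5 by (intro mult_left_mono) auto
      hence "pi - (real m - 1) * t1 \<le> pi - (real m - 1) * (pi / real m)" by linarith
      also have "\<dots> = pi / real m" using m5 by (simp add: field_simps)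
      also have "\<dots> \<le> pi / 2" using m5 by (intro divide_left_mono) auto
      finally show "pi - (real m - 1) * t1 \<le> pi / 2" .
    qed
    thus ?thesis by simp
  qed
  have sb: "0 \<le> sin ((real m - 1) * t2)"
    using i2 m5 by (intro sin_ge_zero) (auto intro!: mult_nonneg_nonneg)
  have g: "sin ((real m - 1) * t2) / sin t2 \<le> sin ((real m - 1) * t1) / sin t1"
  proof -
    have "sin t1 \<le> sin t2" using i1 i2 t12 by (intro sin_monotone_2pi_le) auto
    thus ?thesis using sa sb s1 s2 by (intro frac_le) auto
  qed
  have g0: "0 \<le> sin ((real m - 1) * t2) / sin t2" using sb s2 by simp
  show ?thesis by (rule mult_mono[OF f g f0 g0])
qed

lemma Gm_strict:
  assumes m5: "m \<ge> 5" and t1: "pi / real m \<le> t1" and t12: "t1 < t2" and t2: "t2 \<le> pi / (real m - 1)"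
  shows "Gm m t2 < Gm m t1"
  using Tm_anti[OF m5 t1 _ t2] Hm_strict[OF m5 t1 t12 t2] t12 unfolding Gm_def by simp

lemma Gm_anti:
  assumes m5: "m \<ge> 5" and t1: "pi / real m \<le> t1" and t12: "t1 \<le> t2" and t2: "t2 \<le> pi / (real m - 1)"
  shows "Gm m t2 \<le> Gm m t1"
  using Gm_strict[OF m5 t1 _ t2] t12 by (cases "t1 = t2") auto

lemma Psi_left:
  assumes m5: "m \<ge> 5" shows "Psi m (pi / real m) > 0"
proof -
  define t where "t = pi / real m"
  have t1: "pi / real m \<le> t" and t2: "t \<le> pi / (real m - 1)" using m5
    by (auto simp: t_def intro!: divide_left_mono)
  note ifc = interval_facts[OF m5 t1 t2] note st = small_t[OF ifc(1,2)]
  have a: "sin ((real m - 1) * t) = sin t"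
  proof -
    have "(real m - 1) * t = pi - t" using m5 by (simp add: t_def field_simps)
    thus ?thesis by simp
  qed
  have b: "sin (real m * t) = 0" using m5 by (simp add: t_def)
  have q: "1 - (rr t)\<^sup>2 - rr t ^ 4 > 0"
  proof -
    have "rr t ^ 4 = (rr t)\<^sup>2 * (rr t)\<^sup>2" by (simp add: power2_eq_square power4_eq_xxxx)
    also have "\<dots> \<le> (1/2) * (1/2)" using st by (intro mult_mono) auto
    finally show ?thesis using st by simp
  qed
  have "Psi m t = (1 - (rr t)\<^sup>2 - rr t ^ 4 + rr t ^ m) * sin t" unfolding Psi_def a b
    by (simp add: algebra_simps)
  also have "\<dots> > 0" using q st by (intro mult_pos_pos add_pos_pos) auto
  finally show ?thesis unfolding t_def .
qed

lemma Psi_right: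
  assumes m5: "m \<ge> 5" shows "Psi m (pi / (real m - 1)) < 0"
proof -
  define t where "t = pi / (real m - 1)"
  have t1: "pi / real m \<le> t" and t2: "t \<le> pi / (real m - 1)" using m5
    by (auto simp: t_def intro!: divide_left_mono)
  note ifc = interval_facts[OF m5 t1 t2] note st = small_t[OF ifc(1,2)]
  have a: "sin ((real m - 1) * t) = 0" using m5 by (simp add: t_def)
  have b: "sin (real m * t) = - sin t"
  proof -
    have "real m * t = t + pi" using m5 by (simp add: t_def field_simps)
    thus ?thesis by simp
  qed
  have p: "rr t ^ m < rr t ^ 3" using st m5 by (intro power_strict_decreasing) auto
  have "Psi m t = (rr t ^ m - rr t ^ 3) * sin t" unfolding Psi_def a b
    by (simp add: algebra_simps)
  also have "\<dots> < 0" using p st by (intro mult_neg_pos) auto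
  finally show ?thesis unfolding t_def .
qed

lemma Psi_cont: assumes "cos x \<noteq> 0" shows "isCont (Psi m) x"
  unfolding Psi_def[abs_def] rr_def using assms by (auto intro!: continuous_intros)

lemma Psi_G_I:
  assumes m5: "m \<ge> 5" and t1: "pi / real m \<le> t" and t2: "t \<le> pi / (real m - 1)"
  shows "Psi m t = rr t ^ 3 * sin t * Gm m t" "rr t ^ 3 * sin t > 0" "cos t > 0"
proof -
  note ifc = interval_facts[OF m5 t1 t2] note st = small_t[OF ifc(1,2)]
  show "Psi m t = rr t ^ 3 * sin t * Gm m t" using st m5 by (intro Psi_G) auto
  show "rr t ^ 3 * sin t > 0" using st by simp
  show "cos t > 0" using st by simp
qed

lemma ex1_zero:
  assumes m5: "m \<ge> 5"
  shows "\<exists>!t. t \<in> {pi / real m <..< pi / (real m - 1)} \<and> Phi m t = 0"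
proof -
  have ab: "pi / real m \<le> pi / (real m - 1)" using m5 by (intro divide_left_mono) auto
  have "\<exists>x. pi / real m \<le> x \<and> x \<le> pi / (real m - 1) \<and> Psi m x = 0"
  proof (rule IVT2)
    show "Psi m (pi / (real m - 1)) \<le> 0" using Psi_right[OF m5] by simp
    show "0 \<le> Psi m (pi / real m)" using Psi_left[OF m5] by simp
    show "pi / real m \<le> pi / (real m - 1)" by (rule ab)
    show "\<forall>x. pi / real m \<le> x \<and> x \<le> pi / (real m - 1) \<longrightarrow> isCont (Psi m) x"
    proof (intro allI impI Psi_cont)
      fix x assume "pi / real m \<le> x \<and> x \<le> pi / (real m - 1)"
      thus "cos x \<noteq> 0" using Psi_G_I(3)[OF m5, of x] by auto
    qed
  qed
  then obtain x where x1: "pi / real m \<le> x" and x2: "x \<le> pi / (real m - 1)" and x0: "Psi m x = 0" by blast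
  have xn1: "x \<noteq> pi / real m" using x0 Psi_left[OF m5] by auto
  have xn2: "x \<noteq> pi / (real m - 1)" using x0 Psi_right[OF m5] by auto
  have P: "Phi m x = 0" using x0 Phi_eq[OF Psi_G_I(3)[OF m5 x1 x2]] by simp
  show ?thesis
  proof (rule ex1I[of _ x])
    show "x \<in> {pi / real m <..< pi / (real m - 1)} \<and> Phi m x = 0" using x1 x2 xn1 xn2 P by auto
  next
    fix y assume y: "y \<in> {pi / real m <..< pi / (real m - 1)} \<and> Phi m y = 0"
    hence y1: "pi / real m \<le> y" and y2: "y \<le> pi / (real m - 1)" by auto
    have y0: "Psi m y = 0" using y Phi_eq[OF Psi_G_I(3)[OF m5 y1 y2]] by simp
    have Gx: "Gm m x = 0" using x0 Psi_G_I(1,2)[OF m5 x1 x2] by (metis mult_eq_0_iff less_irrefl)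
    have Gy: "Gm m y = 0" using y0 Psi_G_I(1,2)[OF m5 y1 y2] by (metis mult_eq_0_iff less_irrefl)
    show "y = x"
    proof (rule ccontr)
      assume "y \<noteq> x"
      hence "y < x \<or> x < y" by linarith
      thus False
      proof
        assume "y < x" thus False using Gm_strict[OF m5 y1 _ x2] Gx Gy by simp
      next
        assume "x < y" thus False using Gm_strict[OF m5 x1 _ y2] Gx Gy by simp
      qed
    qed
  qed
qed

lemma eta_props:
  assumes m5: "m \<ge> 5"
  shows "pi / real m < eta_k m" "eta_k m < pi / (real m - 1)" "Psi m (eta_k m) = 0"
proof -
  have "eta_k m \<in> {pi / real m <..< pi / (real m - 1)} \<and> Phi m (eta_k m) = 0"
    unfolding eta_k_def by (rule theI'[OF ex1_zero[OF m5]])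
  hence a: "pi / real m < eta_k m" "eta_k m < pi / (real m - 1)" "Phi m (eta_k m) = 0" by auto
  show "pi / real m < eta_k m" "eta_k m < pi / (real m - 1)" using a by auto
  show "Psi m (eta_k m) = 0" using a Phi_eq[OF Psi_G_I(3)[OF m5]] by auto
qed

lemma after_eta:
  assumes m5: "m \<ge> 5" and t1: "eta_k m \<le> t" and t2: "t \<le> pi / (real m - 1)"
  shows "Psi m t \<le> 0"
proof -
  note e = eta_props[OF m5]
  have e1: "pi / real m \<le> eta_k m" using e by simp
  have e2: "eta_k m \<le> pi / (real m - 1)" using e by simp
  have t1': "pi / real m \<le> t" using e1 t1 by linarith
  have "Gm m (eta_k m) = 0" using e(3) Psi_G_I(1,2)[OF m5 e1 e2] by (metis mult_eq_0_iff less_irrefl)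
  hence "Gm m t \<le> 0" using Gm_anti[OF m5 e1 t1 t2] by simp
  thus ?thesis using Psi_G_I(1,2)[OF m5 t1' t2] by (simp add: mult_nonneg_nonpos)
qed

lemma sin_multi:
  fixes t :: real
  shows "sin (2 * t) = 2 * cos t * sin t"
    "sin (3 * t) = 2 * cos t * sin (2 * t) - sin t"
    "sin (4 * t) = 2 * cos t * sin (3 * t) - sin (2 * t)"
    "sin (5 * t) = 2 * cos t * sin (4 * t) - sin (3 * t)"
    "sin (6 * t) = 2 * cos t * sin (5 * t) - sin (4 * t)"
  using sin_rec[of 1 t] sin_rec[of 2 t] sin_rec[of 3 t] sin_rec[of 4 t] sin_rec[of 5 t]
  by (simp_all add: algebra_simps)

lemma Psi4_id:
  assumes "cos t > 0"
  shows "(rr t)\<^sup>2 * Psi 4 t = sin t * (1 - (rr t)\<^sup>2) * (1 - 2 * ((rr t)\<^sup>2)\<^sup>2)"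
proof -
  have rc: "rr t * (2 * cos t) = 1" using assms by (simp add: rr_def)
  have P: "Psi 4 t = (1 - (rr t)\<^sup>2 - rr t ^ 4) * sin (3 * t) + rr t ^ 3 * sin (4 * t) + rr t ^ 4 * sin t"
    unfolding Psi_def by (simp add: numeral_eq_Suc)
  show ?thesis unfolding P sin_multi(3,2,1) using rc by algebra
qed

lemma Psi5_id:
  assumes "cos t > 0"
  shows "rr t ^ 3 * Psi 5 t = sin t * (1 - 2 * (rr t)\<^sup>2 - 2 * ((rr t)\<^sup>2)\<^sup>2 + 3 * ((rr t)\<^sup>2) ^ 3 + ((rr t)\<^sup>2) ^ 4)"
proof -
  have rc: "rr t * (2 * cos t) = 1" using assms by (simp add: rr_def)
  have P: "Psi 5 t = (1 - (rr t)\<^sup>2 - rr t ^ 4) * sin (4 * t) + rr t ^ 3 * sin (5 * t) + rr t ^ 5 * sin t"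
    unfolding Psi_def by (simp add: numeral_eq_Suc)
  show ?thesis unfolding P sin_multi(4,3,2,1) using rc by algebra
qed

lemma B5_id:
  assumes "cos t > 0"
  shows "rr t ^ (5 + 1) * sin (real 5 * t) + (1 - rr t ^ 4) * sin t
     = sin t * (1 + (rr t)\<^sup>2 - 4 * ((rr t)\<^sup>2)\<^sup>2 + ((rr t)\<^sup>2) ^ 3)"
proof -
  have rc: "rr t * (2 * cos t) = 1" using assms by (simp add: rr_def)
  have e: "sin (real 5 * t) = sin (5 * t)" by simp
  have e2: "(5::nat) + 1 = 6" by simp
  show ?thesis unfolding e e2 sin_multi(4,3,2,1) using rc by algebra
qed

lemma mid_t:
  assumes "pi / 4 \<le> t" "t < pi / 3"
  shows "cos t > 1/2" "sin t > 0" "rr t < 1" "rr t > 0" "(rr t)\<^sup>2 \<ge> 1/2" "cos t > 0"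
proof -
  have "cos (pi/3) < cos t" using assms by (intro cos_monotone_0_pi) auto
  thus c: "cos t > 1/2" by (simp add: cos_60)
  show "cos t > 0" using c by simp
  show "sin t > 0" using assms by (intro sin_gt_zero) auto
  show "rr t < 1" using c unfolding rr_def by (simp add: divide_less_eq)
  show "rr t > 0" using c unfolding rr_def by simp
  have "cos t \<le> cos (pi/4)" using assms by (intro cos_monotone_0_pi_le) auto
  hence c2: "cos t \<le> sqrt 2 / 2" by (simp add: cos_45)
  have "(cos t)\<^sup>2 \<le> (sqrt 2 / 2)\<^sup>2" using c2 c by (intro power_mono) auto
  hence cc: "(cos t)\<^sup>2 \<le> 1/2" by (simp add: power_divide)
  have "(rr t)\<^sup>2 = 1 / (4 * (cos t)\<^sup>2)" by (simp add: rr_def power_divide power_mult_distrib)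
  also have "\<dots> \<ge> 1 / (4 * (1/2))" using cc c by (intro divide_left_mono) auto
  finally show "(rr t)\<^sup>2 \<ge> 1/2" by simp
qed

lemma rr4: "cos t \<noteq> 0 \<Longrightarrow> ((rr t)\<^sup>2)\<^sup>2 = 1 / (2 * cos t) ^ 4"
  by (simp add: rr_def power_divide)

lemma rr4': "rr t ^ 4 = 1 / (2 * cos t) ^ 4"
  by (simp add: rr_def power_divide)

lemma zero4:
  assumes "pi / 4 \<le> t" "t < pi / 3"
  shows "Psi 4 t = 0 \<longleftrightarrow> (2 * cos t) ^ 4 = 2"
proof -
  note mt = mid_t[OF assms]
  have id: "(rr t)\<^sup>2 * Psi 4 t = sin t * (1 - (rr t)\<^sup>2) * (1 - 2 * ((rr t)\<^sup>2)\<^sup>2)"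
    by (rule Psi4_id[OF mt(6)])
  have q1: "(rr t)\<^sup>2 < 1" using mt by (simp add: power_less_one_iff)
  have "Psi 4 t = 0 \<longleftrightarrow> 1 - 2 * ((rr t)\<^sup>2)\<^sup>2 = 0"
  proof
    assume "Psi 4 t = 0"
    hence "sin t * (1 - (rr t)\<^sup>2) * (1 - 2 * ((rr t)\<^sup>2)\<^sup>2) = 0" using id by simp
    thus "1 - 2 * ((rr t)\<^sup>2)\<^sup>2 = 0" using mt q1 by simp
  next
    assume "1 - 2 * ((rr t)\<^sup>2)\<^sup>2 = 0"
    hence "(rr t)\<^sup>2 * Psi 4 t = 0" using id by simp
    thus "Psi 4 t = 0" using mt by simp
  qed
  also have "\<dots> \<longleftrightarrow> (2 * cos t) ^ 4 = 2"
  proof -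
    have p: "(2 * cos t) ^ 4 > 0" using mt by simp
    have "1 - 2 * ((rr t)\<^sup>2)\<^sup>2 = 1 - 2 / (2 * cos t) ^ 4" by (simp add: rr4')
    also have "\<dots> = ((2 * cos t) ^ 4 - 2) / (2 * cos t) ^ 4" using p by (simp add: field_simps)
    finally show ?thesis using p by simp
  qed
  finally show ?thesis .
qed

lemma ex1_zero4:
  shows "\<exists>!t. t \<in> {pi / real 4 <..< pi / (real 4 - 1)} \<and> Phi 4 t = 0"
proof -
  have e3: "pi / (real 4 - 1) = pi / 3" by simp
  have c4: "(2 * cos (pi / 4)) ^ 4 = 4"
  proof -
    have "(2 * cos (pi / 4)) ^ 4 = ((sqrt 2)\<^sup>2)\<^sup>2" by (simp add: cos_45 power_mult_distrib[symmetric] numeral_eq_Suc)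
    thus ?thesis by simp
  qed
  have c3: "(2 * cos (pi / 3)) ^ 4 = 1" by (simp add: cos_60)
  have "\<exists>x. pi / 4 \<le> x \<and> x \<le> pi / 3 \<and> (\<lambda>t. (2 * cos t) ^ 4) x = 2"
  proof (rule IVT2)
    show "(2 * cos (pi / 3)) ^ 4 \<le> (2::real)" using c3 by simp
    show "(2::real) \<le> (2 * cos (pi / 4)) ^ 4" using c4 by simp
    show "pi / 4 \<le> pi / 3" by (simp add: divide_left_mono)
    show "\<forall>x. pi / 4 \<le> x \<and> x \<le> pi / 3 \<longrightarrow> isCont (\<lambda>t. (2 * cos t) ^ 4) x"
      by (auto intro!: continuous_intros)
  qed
  then obtain x where x1: "pi / 4 \<le> x" and x2: "x \<le> pi / 3" and x0: "(2 * cos x) ^ 4 = 2" by auto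
  have xn1: "x \<noteq> pi / 4"
  proof
    assume h: "x = pi / 4" have "(2 * cos x) ^ 4 = 4" unfolding h by (rule c4)
    thus False using x0 by simp
  qed
  have xn2: "x \<noteq> pi / 3"
  proof
    assume h: "x = pi / 3" have "(2 * cos x) ^ 4 = 1" unfolding h by (rule c3)
    thus False using x0 by simp
  qed
  have x2': "x < pi / 3" using x2 xn2 by simp
  have Px: "Phi 4 x = 0" using zero4[OF x1 x2'] x0 Phi_eq[OF mid_t(6)[OF x1 x2']] by simp
  show ?thesis unfolding e3
  proof (rule ex1I[of _ x])
    show "x \<in> {pi / real 4 <..< pi / 3} \<and> Phi 4 x = 0" using x1 x2' xn1 Px by auto
  next
    fix y assume y: "y \<in> {pi / real 4 <..< pi / 3} \<and> Phi 4 y = 0"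
    hence y1: "pi / 4 \<le> y" and y2: "y < pi / 3" by auto
    have "Psi 4 y = 0" using y Phi_eq[OF mid_t(6)[OF y1 y2]] by simp
    hence y0: "(2 * cos y) ^ 4 = 2" using zero4[OF y1 y2] by simp
    have cy: "0 \<le> 2 * cos y" using mid_t(6)[OF y1 y2] by simp
    have cx: "0 \<le> 2 * cos x" using mid_t(6)[OF x1 x2'] by simp
    have e: "(2 * cos y) ^ 4 = (2 * cos x) ^ 4" using y0 x0 by simp
    have "2 * cos y = 2 * cos x"
      by (rule power_eq_imp_eq_base[OF e cy cx]) simp
    hence cyx: "cos y = cos x" by simp
    have p1: "pi / 4 > 0" and p2: "pi / 3 < pi" using pi_gt_zero by simp_all
    show "y = x"
      by (rule cos_inj_pi[OF _ _ _ _ cyx]) (use y1 y2 x1 x2 p1 p2 in linarith)+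
  qed
qed

lemma eta4_props:
  shows "pi / 4 < eta_k 4" "eta_k 4 < pi / 3" "(2 * cos (eta_k 4)) ^ 4 = 2"
proof -
  have "eta_k 4 \<in> {pi / real 4 <..< pi / (real 4 - 1)} \<and> Phi 4 (eta_k 4) = 0"
    unfolding eta_k_def by (rule theI'[OF ex1_zero4])
  hence a: "pi / 4 < eta_k 4" "eta_k 4 < pi / 3" "Phi 4 (eta_k 4) = 0" by auto
  show "pi / 4 < eta_k 4" "eta_k 4 < pi / 3" using a by auto
  have "Psi 4 (eta_k 4) = 0" using a Phi_eq[OF mid_t(6)[of "eta_k 4"]] by auto
  thus "(2 * cos (eta_k 4)) ^ 4 = 2" using zero4[of "eta_k 4"] a by auto
qed

lemma before_eta4:
  assumes "pi / 4 \<le> t" "t < eta_k 4"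
  shows "((rr t)\<^sup>2)\<^sup>2 < 1/2"
proof -
  note e = eta4_props
  have c: "cos (eta_k 4) < cos t" using assms e by (intro cos_monotone_0_pi) auto
  have ce: "cos (eta_k 4) > 0" using mid_t(6)[of "eta_k 4"] e by auto
  have "(2 * cos (eta_k 4)) ^ 4 < (2 * cos t) ^ 4" using c ce by (intro power_strict_mono) auto
  hence "2 < (2 * cos t) ^ 4" using e by simp
  moreover have "((rr t)\<^sup>2)\<^sup>2 = 1 / (2 * cos t) ^ 4" by (simp add: rr4')
  ultimately show ?thesis by (simp add: divide_less_eq)
qed

lemma poly_B5:
  fixes q :: real assumes "1/2 \<le> q" "q\<^sup>2 < 1/2"
  shows "1 + q - 4 * q\<^sup>2 + q ^ 3 \<ge> 0"
proof -
  define d where "d = q - 1/2"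
  have d0: "0 \<le> d" using assms by (simp add: d_def)
  have q71: "q \<le> 71/100"
  proof (rule ccontr)
    assume "\<not> q \<le> 71/100"
    hence "(71/100)\<^sup>2 < q\<^sup>2" by (intro power_strict_mono) auto
    thus False using assms by (simp add: power2_eq_square)
  qed
  have d1: "d \<le> 21/100" using q71 by (simp add: d_def)
  have h2: "d * d \<le> 21/100 * d" using d0 d1 by (intro mult_right_mono) auto
  have h3: "0 \<le> d * d * d" using d0 by simp
  have e: "1 + q - 4 * q\<^sup>2 + q ^ 3 = 5/8 - 9/4 * d - 5/2 * (d * d) + d * d * d"
    unfolding d_def by (simp add: power2_eq_square power3_eq_cube field_simps)
  show ?thesis unfolding e using h2 h3 d1 by linarith
qed

lemma poly_C5:
  fixes q :: real assumes "1/2 \<le> q" "q\<^sup>2 < 1/2"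
  shows "1 - 2 * q - 2 * q\<^sup>2 + 3 * q ^ 3 + q ^ 4 \<le> 0"
proof -
  define d where "d = q - 1/2"
  have d0: "0 \<le> d" using assms by (simp add: d_def)
  have q71: "q \<le> 71/100"
  proof (rule ccontr)
    assume "\<not> q \<le> 71/100"
    hence "(71/100)\<^sup>2 < q\<^sup>2" by (intro power_strict_mono) auto
    thus False using assms by (simp add: power2_eq_square)
  qed
  have d1: "d \<le> 21/100" using q71 by (simp add: d_def)
  have h2: "d * d \<le> 21/100 * d" using d0 d1 by (intro mult_right_mono) auto
  have h3: "d * d * d \<le> d * d * (21/100)" using d0 d1 by (intro mult_left_mono) auto
  have h4: "d * d * d * d \<le> d * d * d * (21/100)" using d0 d1 by (intro mult_left_mono) auto
  have e: "1 - 2 * q - 2 * q\<^sup>2 + 3 * q ^ 3 + q ^ 4 = - 1/16 - 5/4 * d + 4 * (d * d) + 5 * (d * d * d) + d * d * d * d"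
    unfolding d_def by (simp add: power2_eq_square power3_eq_cube power4_eq_xxxx field_simps)
  show ?thesis unfolding e using h2 h3 h4 d0 by linarith
qed

lemma hull_both:
  assumes t0: "0 < t" and t1: "t < pi / 3" and j1: "j \<ge> 1"
    and hA: "sin ((real j + 1) * t) \<le> 0"
    and hB: "rr t ^ (j + 1) * sin (real j * t) + (1 - rr t ^ 4) * sin t \<ge> 0"
    and hC: "Psi j t \<le> 0"
  shows "zz t j \<in> convex hull {0, zz t (j - 1), ww t 1, 1}
       \<and> ww t j \<in> convex hull {1, ww t (j - 1), bb0 t, aa t}"
proof -
  have z: "zz t j \<in> convex hull {0, zz t (j - 1), ww t 1, 1}"
    by (rule geoZ[OF t0 t1 j1 hA]) (use hB hC in \<open>simp_all add: rr_def Psi_def\<close>)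
  have cp: "cos t > 0" using t0 t1 by (intro cos_gt_zero_pi) auto
  show ?thesis using z geoW[OF cp j1 z] by simp
qed

lemma case_C1_big:
  assumes k5: "k \<ge> 5" and t1: "pi / real k \<le> t" and t2: "t < eta_k k"
    and j1: "k + 1 \<le> j" and j2: "j \<le> 2 * k - 3"
  shows "zz t j \<in> convex hull {0, zz t (j - 1), ww t 1, 1}
       \<and> ww t j \<in> convex hull {1, ww t (j - 1), bb0 t, aa t}"
proof -
  note e = eta_props[OF k5]
  have kr: "real k \<ge> 5" using k5 by simp
  have jr1: "real k + 1 \<le> real j" using j1 by linarith
  have jr2: "real j \<le> 2 * real k - 3"
  proof -
    have "real j \<le> real (2 * k - 3)" using j2 by linarith
    also have "real (2 * k - 3) = 2 * real k - 3" using k5 by (simp add: of_nat_diff)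
    finally show ?thesis .
  qed
  have tk: "t < pi / (real k - 1)" using t2 e by linarith
  have pk0: "0 < pi / real k" using kr by simp
  have t0: "0 < t" using pk0 t1 by linarith
  have pk4: "pi / (real k - 1) \<le> pi / 4" using kr by (intro divide_left_mono) auto
  have t4: "t \<le> pi / 4" using tk pk4 by linarith
  have p43: "pi / 4 < pi / 3" by (simp add: divide_strict_left_mono)
  have t3: "t < pi / 3" using t4 p43 by linarith
  have kt: "pi \<le> real k * t" using t1 kr by (simp add: field_simps)
  have kt2: "(real k - 1) * t < pi" using tk kr by (simp add: field_simps)
  have A1: "pi \<le> (real j + 1) * t"
  proof -
    have "real k * t \<le> (real j + 1) * t" using jr1 t0 by (intro mult_right_mono) auto
    thus ?thesis using kt by linarith
  qed
  have A2: "(real j + 1) * t \<le> 2 * pi"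
  proof -
    have "(real j + 1) * t \<le> (2 * (real k - 1)) * t" using jr2 t0 by (intro mult_right_mono) auto
    thus ?thesis using kt2 by linarith
  qed
  have C1: "pi \<le> (real j - 1) * t"
  proof -
    have "real k * t \<le> (real j - 1) * t" using jr1 t0 by (intro mult_right_mono) auto
    thus ?thesis using kt by linarith
  qed
  show ?thesis
  proof (rule hull_both[OF t0 t3])
    show "1 \<le> j" using j1 by simp
    show "sin ((real j + 1) * t) \<le> 0" using A1 A2 by (rule sin_le0)
    show "rr t ^ (j + 1) * sin (real j * t) + (1 - rr t ^ 4) * sin t \<ge> 0" by (rule condB_gen[OF t0 t4])
    show "Psi j t \<le> 0" using j1 k5 C1 A2 by (intro condC_gen[OF t0 t4]) auto
  qed
qed

lemma case_C2:
  assumes k4: "k \<ge> 4" and t1: "eta_k (k + 1) \<le> t" and t2: "t < pi / real k"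
    and j1: "k + 1 \<le> j" and j2: "j \<le> 2 * k - 1"
  shows "zz t j \<in> convex hull {0, zz t (j - 1), ww t 1, 1}
       \<and> ww t j \<in> convex hull {1, ww t (j - 1), bb0 t, aa t}"
proof -
  have k5: "k + 1 \<ge> 5" using k4 by simp
  note e = eta_props[OF k5]
  have kr: "real k \<ge> 4" using k4 by simp
  have jr1: "real k + 1 \<le> real j" using j1 by linarith
  have jr2: "real j \<le> 2 * real k - 1"
  proof -
    have "real j \<le> real (2 * k - 1)" using j2 by linarith
    also have "real (2 * k - 1) = 2 * real k - 1" using k4 by (simp add: of_nat_diff)
    finally show ?thesis .
  qed
  have ee: "pi / (real k + 1) = pi / (1 + real k)" by (simp add: add.commute)
  have e0: "pi / (1 + real k) < eta_k (k + 1)" using e(1) by simp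
  have e1: "pi / (real k + 1) < t" using e0 t1 unfolding ee by linarith
  have pk0: "0 < pi / (real k + 1)" using kr by simp
  have t0: "0 < t" using pk0 e1 by linarith
  have pk4: "pi / real k \<le> pi / 4" using kr by (intro divide_left_mono) auto
  have t4: "t \<le> pi / 4" using t2 pk4 by linarith
  have p43: "pi / 4 < pi / 3" by (simp add: divide_strict_left_mono)
  have t3: "t < pi / 3" using t4 p43 by linarith
  have kt: "pi < (real k + 1) * t" using e1 kr by (simp add: field_simps)
  have kt2: "real k * t < pi" using t2 kr by (simp add: field_simps)
  have A1: "pi \<le> (real j + 1) * t"
  proof -
    have "(real k + 1) * t \<le> (real j + 1) * t" using jr1 t0 by (intro mult_right_mono) auto
    thus ?thesis using kt by linarith
  qed
  have A2: "(real j + 1) * t \<le> 2 * pi"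
  proof -
    have "(real j + 1) * t \<le> (2 * real k) * t" using jr2 t0 by (intro mult_right_mono) auto
    thus ?thesis using kt2 by linarith
  qed
  show ?thesis
  proof (rule hull_both[OF t0 t3])
    show "1 \<le> j" using j1 by simp
    show "sin ((real j + 1) * t) \<le> 0" using A1 A2 by (rule sin_le0)
    show "rr t ^ (j + 1) * sin (real j * t) + (1 - rr t ^ 4) * sin t \<ge> 0" by (rule condB_gen[OF t0 t4])
    show "Psi j t \<le> 0"
    proof (cases "j = k + 1")
      case True
      have "t \<le> pi / (real (k + 1) - 1)" using t2 by simp
      thus ?thesis unfolding True by (intro after_eta[OF k5 t1])
    next
      case False
      hence jr3: "real k + 2 \<le> real j" using j1 by linarith
      have C1: "pi \<le> (real j - 1) * t"
      proof -
        have "(real k + 1) * t \<le> (real j - 1) * t" using jr3 t0 by (intro mult_right_mono) auto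
        thus ?thesis using kt by linarith
      qed
      show ?thesis using j1 k4 C1 A2 by (intro condC_gen[OF t0 t4]) auto
    qed
  qed
qed

lemma case_C1_4:
  assumes t1: "pi / 4 \<le> t" and t2: "t < eta_k 4"
  shows "zz t 5 \<in> convex hull {0, zz t (5 - 1), ww t 1, 1}
       \<and> ww t 5 \<in> convex hull {1, ww t (5 - 1), bb0 t, aa t}"
proof -
  note e = eta4_props
  have t3: "t < pi / 3" using t2 e by linarith
  note mt = mid_t[OF t1 t3]
  have t0: "0 < t" using t1 pi_gt_zero by linarith
  have q1: "1/2 \<le> (rr t)\<^sup>2" using mt by simp
  have q2: "((rr t)\<^sup>2)\<^sup>2 < 1/2" by (rule before_eta4[OF t1 t2])
  show ?thesis
  proof (rule hull_both[OF t0 t3])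
    show "1 \<le> (5::nat)" by simp
    have "pi \<le> (real 5 + 1) * t" using t1 t0 by simp
    moreover have "(real 5 + 1) * t \<le> 2 * pi" using t3 by simp
    ultimately show "sin ((real 5 + 1) * t) \<le> 0" by (rule sin_le0)
    show "rr t ^ (5 + 1) * sin (real 5 * t) + (1 - rr t ^ 4) * sin t \<ge> 0"
      unfolding B5_id[OF mt(6)] using poly_B5[OF q1 q2] mt by simp
    have "rr t ^ 3 * Psi 5 t \<le> 0"
      unfolding Psi5_id[OF mt(6)] using poly_C5[OF q1 q2] mt by (simp add: mult_nonneg_nonpos)
    thus "Psi 5 t \<le> 0" using mt by (simp add: mult_le_0_iff)
  qed
qed

theorem lemma5p3:
  fixes k j :: nat and \<eta> :: real
  assumes "k \<ge> 4"
    and "(\<eta> \<in> {pi / real k ..< eta_k k} \<and> j \<in> {k+1 .. 2*k-3})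
         \<or> (\<eta> \<in> {eta_k (k+1) ..< pi / real k} \<and> j \<in> {k+1 .. 2*k-1})"
  shows "zz \<eta> j \<in> convex hull {0, zz \<eta> (j - 1), ww \<eta> 1, 1}
       \<and> ww \<eta> j \<in> convex hull {1, ww \<eta> (j - 1), bb0 \<eta>, aa \<eta>}"
  using assms(2)
proof
  assume h: "\<eta> \<in> {pi / real k ..< eta_k k} \<and> j \<in> {k+1 .. 2*k-3}"
  show ?thesis
  proof (cases "k = 4")
    case True
    have j5: "j = 5" using h True by auto
    show ?thesis using case_C1_4[of \<eta>] h unfolding j5 True by simp
  next
    case False
    hence "k \<ge> 5" using assms(1) by simp
    thus ?thesis using case_C1_big[of k \<eta> j] h by auto
  qed
next
  assume h: "\<eta> \<in> {eta_k (k+1) ..< pi / real k} \<and> j \<in> {k+1 .. 2*k-1}"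
  thus ?thesis using case_C2[OF assms(1), of \<eta> j] by auto
qed

end
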